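(* For all $Q\in(0,1)$, $z>0$ and $y\in(0,1]$, $$\sum_{m\in\mathbb{Z}} Q^{\frac{m(m+1)}{2}}z^m=Z(Q,z,y)\prod_{i=1}^\infty\frac{1-Q^i}{1+(y-1)Q^i},$$ where $$Z(Q,z,y) = 1 + \sum_{\substack{L,R\geq0\\ L+R>0}}y^{L+R} \sum_{\substack{\ell_1,\dots,\ell_L\geq 1 \\ m_1,\dots,m_{R}\geq 1}}\prod_{j=1}^{L} \frac{Q^{\frac12 \ell_j(\ell_j-1)+j\ell_j+\ell_{j-1}(\ell_j+\cdots+\ell_{L})}z^{-\ell_j}}{1-Q^{\ell_j+\cdots + \ell_{L}}}\prod_{j=1}^{R}\frac{Q^{\frac12 m_j(m_j-1)+jm_j+m_{j-1}(m_{j}+\cdots+m_{R})}z^{m_j}}{1-Q^{m_{j}+\cdots+m_{R}}}\Big(\big(1-y^{-1}\big)Q^{\ell_1+\cdots + \ell_L}Q^{m_{1}+\cdots+m_{R}} + y^{-1}\Big),$$ with the conventions $\ell_0=-1$ and $m_0=0$.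
   Context: In the sum defining $Z(Q,z,y)$, $L$ and $R$ range over nonnegative integers with $L+R>0$, and for given $L,R$ the inner sum ranges over all tuples of positive integers $(\ell_1,\dots,\ell_L)$ and $(m_1,\dots,m_R)$; an empty product equals $1$ (so e.g. when $L=0$ the first product is $1$ and $\ell_1+\cdots+\ell_L=0$). *)

theory Defs
  imports "HOL-Analysis.Analysis"
begin

text \<open>The list xs = [x_1,...,x_K] (0-based in Isabelle: x_j = xs!(j-1)),
  c is the convention value x_0, and e is the sign of the exponent of z
  (e = -1 for the l-product, e = 1 for the m-product).\<close>
definition zblock :: "real \<Rightarrow> real \<Rightarrow> real \<Rightarrow> real \<Rightarrow> nat list \<Rightarrow> real" where
  "zblock Q z c e xs =
     (\<Prod>j\<in>{1..length xs}.
        let x = real (xs ! (j - 1));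
            prev = (if j = 1 then c else real (xs ! (j - 2)));
            t = sum_list (drop (j - 1) xs)
        in Q powr (x * (x - 1) / 2 + real j * x + prev * real t) * z powr (e * x)
           / (1 - Q ^ t))"

definition zindex :: "(nat list \<times> nat list) set" where
  "zindex = {(ls, ms). (\<forall>l\<in>set ls. 1 \<le> l) \<and> (\<forall>m\<in>set ms. 1 \<le> m)
                       \<and> 0 < length ls + length ms}"

definition zterm :: "real \<Rightarrow> real \<Rightarrow> real \<Rightarrow> nat list \<times> nat list \<Rightarrow> real" where
  "zterm Q z y p = (case p of (ls, ms) \<Rightarrow>
      y ^ (length ls + length ms) * zblock Q z (-1) (-1) ls * zblock Q z 0 1 ms
      * ((1 - 1 / y) * Q ^ (sum_list ls + sum_list ms) + 1 / y))"

definition Zfun :: "real \<Rightarrow> real \<Rightarrow> real \<Rightarrow> real" where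
  "Zfun Q z y = 1 + (\<Sum>\<^sub>\<infinity>p\<in>zindex. zterm Q z y p)"

end

theory Submission
  imports Defs
begin


definition qp :: "real \<Rightarrow> real \<Rightarrow> nat \<Rightarrow> real" where
  "qp q x n = (\<Prod>i<n. 1 - x * q ^ i)"

lemma qp_0[simp]: "qp q x 0 = 1" by (simp add: qp_def)

lemma qp_Suc: "qp q x (Suc n) = qp q x n * (1 - x * q ^ n)"
  by (simp add: qp_def)

lemma qp_Suc': "qp q x (Suc n) = (1 - x) * qp q (x * q) n"
  unfolding qp_def by (subst prod.lessThan_Suc_shift) (simp add: mult.assoc)

lemma qp_nonneg:
  assumes "0 \<le> x" "x \<le> 1" "0 \<le> q" "q \<le> 1"
  shows "0 \<le> qp q x n"
  unfolding qp_def
proof (rule prod_nonneg)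
  fix i assume "i \<in> {..<n}"
  have "q ^ i \<le> 1" using assms by (simp add: power_le_one)
  hence "x * q ^ i \<le> 1" using assms by (metis mult_le_one zero_le_power)
  thus "0 \<le> 1 - x * q ^ i" by simp
qed

lemma qp_pos:
  assumes "0 \<le> x" "x < 1" "0 \<le> q" "q \<le> 1"
  shows "0 < qp q x n"
  unfolding qp_def
proof (rule prod_pos)
  fix i assume "i \<in> {..<n}"
  have "q ^ i \<le> 1" using assms by (simp add: power_le_one)
  hence "x * q ^ i \<le> x" using assms by (simp add: mult_left_le)
  hence "x * q ^ i < 1" using assms by linarith
  thus "0 < 1 - x * q ^ i" by simp
qed

lemma qp_le1:
  assumes "0 \<le> x" "x \<le> 1" "0 \<le> q" "q \<le> 1"
  shows "qp q x n \<le> 1"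
  unfolding qp_def
proof (rule prod_le_1)
  fix i assume "i \<in> {..<n}"
  have "q ^ i \<le> 1" using assms by (simp add: power_le_one)
  hence "x * q ^ i \<le> 1" using assms by (simp add: mult_le_one)
  thus "0 \<le> 1 - x * q ^ i \<and> 1 - x * q ^ i \<le> 1" using assms by simp
qed

lemma prod_ge_1_minus_sum:
  fixes u :: "nat \<Rightarrow> real"
  assumes "\<And>i. i < n \<Longrightarrow> 0 \<le> u i \<and> u i \<le> 1"
  shows "(\<Prod>i<n. 1 - u i) \<ge> 1 - (\<Sum>i<n. u i)"
  using assms
proof (induction n)
  case 0 then show ?case by simp
next
  case (Suc n)
  have IH: "(\<Prod>i<n. 1 - u i) \<ge> 1 - (\<Sum>i<n. u i)" using Suc by auto
  have P0: "0 \<le> (\<Prod>i<n. 1 - u i)" by (rule prod_nonneg) (use Suc.prems in auto)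
  have P1: "(\<Prod>i<n. 1 - u i) \<le> 1" by (rule prod_le_1) (use Suc.prems in auto)
  have U: "0 \<le> u n" "u n \<le> 1" using Suc.prems by auto
  have "(\<Prod>i<Suc n. 1 - u i) = (\<Prod>i<n. 1 - u i) * (1 - u n)" by simp
  also have "\<dots> \<ge> (\<Prod>i<n. 1 - u i) - u n" using mult_left_le[OF P1 U(1)] by (simp add: algebra_simps)
  finally show ?case using IH by simp
qed

lemma qp_ge:
  assumes "0 \<le> x" "x \<le> 1" "0 \<le> q" "q < 1"
  shows "qp q x n \<ge> 1 - x / (1 - q)"
proof -
  have "qp q x n \<ge> 1 - (\<Sum>i<n. x * q ^ i)"
    unfolding qp_def
  proof (rule prod_ge_1_minus_sum)
    fix i assume "i < n"
    have "q ^ i \<le> 1" using assms by (simp add: power_le_one)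
    thus "0 \<le> x * q ^ i \<and> x * q ^ i \<le> 1" using assms by (simp add: mult_le_one)
  qed
  moreover have "(\<Sum>i<n. x * q ^ i) \<le> x / (1 - q)"
  proof -
    have "(\<Sum>i<n. q ^ i) \<le> (\<Sum>i. q ^ i)"
      using assms by (intro sum_le_suminf) (auto intro: summable_geometric)
    also have "\<dots> = 1 / (1 - q)" using assms by (simp add: suminf_geometric)
    finally have "x * (\<Sum>i<n. q ^ i) \<le> x * (1 / (1 - q))" using assms by (intro mult_left_mono) auto
    thus ?thesis by (simp add: sum_distrib_left)
  qed
  ultimately show ?thesis by linarith
qed

definition tt :: "real \<Rightarrow> real \<Rightarrow> real \<Rightarrow> nat \<Rightarrow> real" where
  "tt q c b n = (if n = 0 then 1 else qp q (b*q) (n-1) * (1 - b*q^(2*n)) * qp q (b*q/c) n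
       * q^(n*n-n) * c^n / (qp q q n * qp q c n))"

definition gg :: "real \<Rightarrow> real \<Rightarrow> real \<Rightarrow> nat \<Rightarrow> real" where
  "gg q c b n = (if n = 0 then 0 else b * q^(n*n-n+1) * c^(n-1) * qp q (b*q) (n-1)
       * qp q (b*q^2/c) (n-1) / (qp q q (n-1) * qp q c (n-1)))"

lemma tele_poly:
  fixes b q c u :: real
  shows "(c-b*q)*(1-b*q^2*u^2) - (1-b*q*u)*(1-b*q^3*u^2)*(c-b*q^2*u)
     - b*u^2*q^3*(1-b*q*u)*(c-b*q^2*u) + b*q*(1-q*u)*(1-c*u) = 0"
  by (simp add: algebra_simps power2_eq_square power3_eq_cube)

lemma tele:
  assumes "0 < q" "q < 1" "0 < c" "c < 1"
  shows "tt q c b n - (1 - b*q) * tt q c (b*q) n = gg q c b (Suc n) - gg q c b n"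
proof (cases n)
  case 0
  then show ?thesis by (simp add: tt_def gg_def)
next
  case (Suc m)
  define A where "A = qp q (b*q) m"
  define E where "E = qp q (b*q^2/c) m"
  define D1 where "D1 = qp q q m"
  define D2 where "D2 = qp q c m"
  define u where "u = q^m"
  define V where "V = q^(m*m+m)"
  define C where "C = c^m"
  define X where "X = 1 - q*u"
  define Y where "Y = 1 - c*u"
  have r1: "(1 - b*q) * qp q (b*q*q) m = A * (1 - b*q*u)"
    using qp_Suc'[of q "b*q" m] qp_Suc[of q "b*q" m] by (simp add: A_def u_def)
  have r2: "qp q (b*q/c) (Suc m) = (1 - b*q/c) * E"
    using qp_Suc'[of q "b*q/c" m] by (simp add: E_def power2_eq_square mult.commute mult.left_commute)
  have r3: "qp q (b*q*q/c) (Suc m) = E * (1 - b*q^2/c*u)"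
    using qp_Suc[of q "b*q^2/c" m] by (simp add: E_def u_def power2_eq_square mult.assoc)
  have r4: "qp q (b*q) (Suc m) = A * (1 - b*q*u)"
    using qp_Suc[of q "b*q" m] by (simp add: A_def u_def)
  have r5: "qp q q (Suc m) = D1 * X"
    using qp_Suc[of q q m] by (simp add: D1_def u_def X_def)
  have r6: "qp q c (Suc m) = D2 * Y"
    using qp_Suc[of q c m] by (simp add: D2_def u_def Y_def)
  have p1: "q^(Suc m * Suc m - Suc m) = V" by (simp add: V_def algebra_simps)
  have p2: "q^(2 * Suc m) = q^2*u^2"
  proof -
    have "2 * Suc m = 2 + m*2" by simp
    hence "q^(2 * Suc m) = q^(2 + m*2)" by (simp only:)
    also have "\<dots> = q^2*u^2" by (simp only: power_add power_mult u_def)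
    finally show ?thesis .
  qed
  have p3: "q^(Suc (Suc m) * Suc (Suc m) - Suc (Suc m) + 1) = V*u^2*q^3"
  proof -
    have "Suc (Suc m) * Suc (Suc m) - Suc (Suc m) + 1 = (m*m+m) + m*2 + 3" by simp
    hence "q^(Suc (Suc m) * Suc (Suc m) - Suc (Suc m) + 1) = q^((m*m+m) + m*2 + 3)" by (simp only:)
    also have "\<dots> = V*u^2*q^3" by (simp only: power_add power_mult V_def u_def)
    finally show ?thesis .
  qed
  have p4: "q^(Suc m * Suc m - Suc m + 1) = V*q"
    by (simp add: V_def algebra_simps)
  have uq: "0 < u" "u \<le> 1" using assms by (auto simp: u_def power_le_one)
  have nz: "D1 \<noteq> 0" "D2 \<noteq> 0" "X \<noteq> 0" "Y \<noteq> 0" "c \<noteq> 0"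
  proof -
    show "D1 \<noteq> 0" unfolding D1_def using qp_pos[of q q m] assms by auto
    show "D2 \<noteq> 0" unfolding D2_def using qp_pos[of c q m] assms by auto
    have "q*u \<le> q" using uq assms by (simp add: mult_left_le)
    hence "q*u < 1" using assms by linarith
    thus "X \<noteq> 0" by (simp add: X_def)
    have "c*u \<le> c" using uq assms by (simp add: mult_left_le)
    hence "c*u < 1" using assms by linarith
    thus "Y \<noteq> 0" by (simp add: Y_def)
    show "c \<noteq> 0" using assms by simp
  qed
  have T1: "tt q c b n = A*E*V*C*((c-b*q)*(1-b*q^2*u^2))/(D1*X*(D2*Y))"
  proof -
    have "tt q c b n = A*(1-b*q^2*u^2)*((1-b*q/c)*E)*V*(C*c)/((D1*X)*(D2*Y))"
      unfolding tt_def Suc using r2 r5 r6 p1 p2 by (simp add: A_def C_def)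
    also have "\<dots> = A*E*V*C*((c-b*q)*(1-b*q^2*u^2))/(D1*X*(D2*Y))"
      using nz by (simp add: field_simps)
    finally show ?thesis .
  qed
  have T2: "(1 - b*q) * tt q c (b*q) n = A*E*V*C*((1-b*q*u)*(1-b*q^3*u^2)*(c-b*q^2*u))/(D1*X*(D2*Y))"
  proof -
    have "(1 - b*q) * tt q c (b*q) n = ((1 - b*q) * qp q (b*q*q) m) * (1 - b*q*q^(2*Suc m))
        * qp q (b*q*q/c) (Suc m) * q^(Suc m * Suc m - Suc m) * c^Suc m / (qp q q (Suc m) * qp q c (Suc m))"
      unfolding tt_def Suc by simp
    also have "\<dots> = A*(1-b*q*u)*(1-b*q*(q^2*u^2))*(E*(1-b*q^2/c*u))*V*(C*c)/((D1*X)*(D2*Y))"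
      unfolding r1 r3 r5 r6 p1 p2 by (simp add: C_def)
    also have "\<dots> = A*E*V*C*((1-b*q*u)*(1-b*q^3*u^2)*(c-b*q^2*u))/(D1*X*(D2*Y))"
      using nz by (simp add: field_simps power2_eq_square power3_eq_cube)
    finally show ?thesis .
  qed
  have G2: "gg q c b (Suc n) = A*E*V*C*(b*u^2*q^3*(1-b*q*u)*(c-b*q^2*u))/(D1*X*(D2*Y))"
  proof -
    have "gg q c b (Suc n) = b*(V*u^2*q^3)*(C*c)*(A*(1-b*q*u))*(E*(1-b*q^2/c*u))/((D1*X)*(D2*Y))"
      unfolding gg_def Suc using r3 r4 r5 r6 p3
      by (simp add: C_def power2_eq_square mult.commute mult.left_commute)
    also have "\<dots> = A*E*V*C*(b*u^2*q^3*(1-b*q*u)*(c-b*q^2*u))/(D1*X*(D2*Y))"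
      using nz by (simp add: field_simps)
    finally show ?thesis .
  qed
  have G1: "gg q c b n = A*E*V*C*(b*q*X*Y)/(D1*X*(D2*Y))"
  proof -
    have "gg q c b n = b*(V*q)*C*A*E/(D1*D2)"
      unfolding gg_def Suc using p4 by (simp add: A_def C_def D1_def D2_def E_def)
    also have "\<dots> = A*E*V*C*(b*q*X*Y)/(D1*X*(D2*Y))"
      using nz by (simp add: field_simps)
    finally show ?thesis .
  qed
  have key: "(c-b*q)*(1-b*q^2*u^2) - (1-b*q*u)*(1-b*q^3*u^2)*(c-b*q^2*u)
     = b*u^2*q^3*(1-b*q*u)*(c-b*q^2*u) - b*q*X*Y"
    unfolding X_def Y_def by (simp add: algebra_simps power2_eq_square power3_eq_cube)
  have L: "A*E*V*C*((c-b*q)*(1-b*q^2*u^2))/(D1*X*(D2*Y)) - A*E*V*C*((1-b*q*u)*(1-b*q^3*u^2)*(c-b*q^2*u))/(D1*X*(D2*Y))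
     = A*E*V*C*((c-b*q)*(1-b*q^2*u^2) - (1-b*q*u)*(1-b*q^3*u^2)*(c-b*q^2*u))/(D1*X*(D2*Y))"
    by (simp only: right_diff_distrib diff_divide_distrib)
  have R: "A*E*V*C*(b*u^2*q^3*(1-b*q*u)*(c-b*q^2*u))/(D1*X*(D2*Y)) - A*E*V*C*(b*q*X*Y)/(D1*X*(D2*Y))
     = A*E*V*C*(b*u^2*q^3*(1-b*q*u)*(c-b*q^2*u) - b*q*X*Y)/(D1*X*(D2*Y))"
    by (simp only: right_diff_distrib diff_divide_distrib)
  have "tt q c b n - (1 - b*q) * tt q c (b*q) n
      = A*E*V*C*((c-b*q)*(1-b*q^2*u^2) - (1-b*q*u)*(1-b*q^3*u^2)*(c-b*q^2*u))/(D1*X*(D2*Y))"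
    unfolding T1 T2 by (rule L)
  also have "\<dots> = A*E*V*C*(b*u^2*q^3*(1-b*q*u)*(c-b*q^2*u) - b*q*X*Y)/(D1*X*(D2*Y))"
    by (simp only: key)
  also have "\<dots> = gg q c b (Suc n) - gg q c b n"
    unfolding G1 G2 by (rule R[symmetric])
  finally show ?thesis .
qed


definition T0 :: "real \<Rightarrow> real \<Rightarrow> nat \<Rightarrow> real" where
  "T0 q c n = q^(n*n-n) * c^n / (qp q q n * qp q c n)"

definition FF :: "real \<Rightarrow> real \<Rightarrow> real \<Rightarrow> nat \<Rightarrow> real" where
  "FF q c b n = (if n = 0 then 1 else qp q (b*q) (n-1) * (1 - b*q^(2*n)) * qp q (b*q/c) n)"

lemma qp_zero[simp]: "qp q 0 n = 1" by (simp add: qp_def)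

lemma tt_FF: "tt q c b n = FF q c b n * T0 q c n"
  by (simp add: tt_def FF_def T0_def)

lemma tt_zero: "tt q c 0 n = T0 q c n"
  by (simp add: tt_def T0_def)

lemma T0_nonneg:
  assumes "0 < q" "q < 1" "0 < c" "c < 1"
  shows "0 \<le> T0 q c n"
  unfolding T0_def using qp_pos[of q q n] qp_pos[of c q n] assms by simp

lemma mult_ge_sum_minus1:
  fixes A B :: real
  assumes "0 \<le> A" "A \<le> 1" "0 \<le> B" "B \<le> 1"
  shows "A * B \<ge> A + B - 1"
proof -
  have "0 \<le> (1 - A) * (1 - B)" using assms by simp
  thus ?thesis by (simp add: algebra_simps)
qed

lemma FF_bounds:
  assumes "0 < q" "q < 1" "0 < c" "c < 1" "0 \<le> b" "b \<le> c / q"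
  shows "0 \<le> FF q c b n" "FF q c b n \<le> 1"
    "FF q c b n \<ge> 1 - b * (q/(1-q) + 1 + q/(c*(1-q)))"
proof -
  have bq: "b*q \<le> c" using assms by (simp add: field_simps)
  have bq1: "b*q \<le> 1" using bq assms by simp
  have bqc: "b*q/c \<le> 1" using bq assms by simp
  have bqc0: "0 \<le> b*q/c" using assms by simp
  have bq0: "0 \<le> b*q" using assms by simp
  have "0 \<le> FF q c b n \<and> FF q c b n \<le> 1 \<and> FF q c b n \<ge> 1 - b * (q/(1-q) + 1 + q/(c*(1-q)))"
  proof (cases n)
    case 0
    then show ?thesis using assms by (simp add: FF_def)
  next
    case (Suc m)
    define A1 where "A1 = qp q (b*q) m"
    define A2 where "A2 = 1 - b*q^(2*n)"
    define A3 where "A3 = qp q (b*q/c) n"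
    have F: "FF q c b n = A1 * A2 * A3" by (simp add: FF_def Suc A1_def A2_def A3_def)
    have a1: "0 \<le> A1" "A1 \<le> 1" "A1 \<ge> 1 - b*q/(1-q)"
      unfolding A1_def using qp_nonneg[OF bq0 bq1, of q m] qp_le1[OF bq0 bq1, of q m]
        qp_ge[OF bq0 bq1, of q m] assms by auto
    have a3: "0 \<le> A3" "A3 \<le> 1" "A3 \<ge> 1 - (b*q/c)/(1-q)"
      unfolding A3_def using qp_nonneg[OF bqc0 bqc, of q n] qp_le1[OF bqc0 bqc, of q n]
        qp_ge[OF bqc0 bqc, of q n] assms by auto
    have qq: "q^(2*n) \<le> q"
    proof -
      have "q^(2*n) \<le> q^1" using assms Suc by (intro power_decreasing) auto
      thus ?thesis by simp
    qed
    have "b*q^(2*n) \<le> b*q" using qq assms by (simp add: mult_left_mono)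
    moreover have "0 \<le> b*q^(2*n)" using assms by simp
    moreover have "b*q^(2*n) \<le> b" using qq assms by (metis mult_left_le order_trans less_imp_le)
    ultimately have a2: "0 \<le> A2" "A2 \<le> 1" "A2 \<ge> 1 - b" using bq1 unfolding A2_def by auto
    have p12: "0 \<le> A1*A2" "A1*A2 \<le> 1" "A1*A2 \<ge> A1 + A2 - 1"
      using a1 a2 mult_ge_sum_minus1[of A1 A2] by (auto simp: mult_le_one)
    have "A1*A2*A3 \<ge> A1*A2 + A3 - 1" using p12 a3 mult_ge_sum_minus1[of "A1*A2" A3] by auto
    moreover have "b*q/(1-q) + b + (b*q/c)/(1-q) = b * (q/(1-q) + 1 + q/(c*(1-q)))"
      using assms by (simp add: field_simps)
    ultimately have "A1*A2*A3 \<ge> 1 - b * (q/(1-q) + 1 + q/(c*(1-q)))" using a1 a2 a3 p12 by linarith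
    moreover have "0 \<le> A1*A2*A3" "A1*A2*A3 \<le> 1" using p12 a3 by (auto simp: mult_le_one)
    ultimately show ?thesis unfolding F by auto
  qed
  thus "0 \<le> FF q c b n" "FF q c b n \<le> 1"
    "FF q c b n \<ge> 1 - b * (q/(1-q) + 1 + q/(c*(1-q)))" by auto
qed

lemma T0_Suc:
  assumes "0 < q" "q < 1" "0 < c" "c < 1"
  shows "T0 q c (Suc n) = T0 q c n * (q^(2*n) * c / ((1 - q*q^n) * (1 - c*q^n)))"
proof -
  have e: "Suc n * Suc n - Suc n = (n*n - n) + 2*n"
    by (cases n) (auto simp: algebra_simps)
  have "q^(Suc n * Suc n - Suc n) = q^((n*n-n) + 2*n)" by (simp only: e)
  also have "\<dots> = q^(n*n-n) * q^(2*n)" by (simp only: power_add)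
  finally have "q^(Suc n * Suc n - Suc n) = q^(n*n-n) * q^(2*n)" .
  moreover have qn1: "q^n \<le> 1" using assms by (simp add: power_le_one)
  moreover have "q*q^n \<le> q" "c*q^n \<le> c" using qn1 assms by (auto simp: mult_left_le)
  hence "q*q^n < 1" "c*q^n < 1" using assms by linarith+
  ultimately have nz: "qp q q n \<noteq> 0" "qp q c n \<noteq> 0" "1 - q*q^n \<noteq> 0" "1 - c*q^n \<noteq> 0"
    "q^(Suc n * Suc n - Suc n) = q^(n*n-n) * q^(2*n)"
    using qp_pos[of q q n] qp_pos[of c q n] assms by auto
  show ?thesis unfolding T0_def qp_Suc nz(5) using nz(1-4)
    by (simp add: field_simps)
qed

lemma summable_T0:
  assumes "0 < q" "q < 1" "0 < c" "c < 1"
  shows "summable (T0 q c)"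
proof -
  define eps where "eps = (1-q)*(1-c)/(2*c)"
  have eps: "0 < eps" using assms by (simp add: eps_def)
  obtain N where N: "q^N < eps" using real_arch_pow_inv[OF eps assms(2)] by blast
  show ?thesis
  proof (rule summable_ratio_test[where c="1/2" and N=N])
    show "norm (T0 q c (Suc n)) \<le> 1/2 * norm (T0 q c n)" if n: "N \<le> n" for n
    proof -
      have qn: "q^n \<le> q^N" using n assms by (intro power_decreasing) auto
      have q2n: "q^(2*n) \<le> q^n" using assms by (intro power_decreasing) auto
      have qn1: "q^n \<le> 1" using assms by (simp add: power_le_one)
      have d1: "1 - q*q^n \<ge> 1 - q" using qn1 assms by (simp add: mult_left_le)
      have d2: "1 - c*q^n \<ge> 1 - c" using qn1 assms by (simp add: mult_left_le)
      have pos1: "0 < 1 - q" "0 < 1 - c" using assms by auto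
      have "(1-q)*(1-c) \<le> (1 - q*q^n) * (1 - c*q^n)"
        using d1 d2 pos1 by (intro mult_mono) auto
      moreover have "q^(2*n) \<le> eps" using qn q2n N by linarith
      hence "q^(2*n) * c \<le> eps * c" using assms by (intro mult_right_mono) auto
      moreover have "eps * c = 1/2 * ((1-q)*(1-c))" using assms by (simp add: eps_def)
      ultimately have r: "q^(2*n) * c \<le> 1/2 * ((1 - q*q^n) * (1 - c*q^n))" by linarith
      have dpos: "0 < (1 - q*q^n) * (1 - c*q^n)" using d1 d2 pos1 by (intro mult_pos_pos) auto
      have ratio: "q^(2*n) * c / ((1 - q*q^n) * (1 - c*q^n)) \<le> 1/2"
        using r dpos by (simp add: divide_le_eq)
      have rnn: "0 \<le> q^(2*n) * c / ((1 - q*q^n) * (1 - c*q^n))" using dpos assms by simp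
      have t0: "0 \<le> T0 q c n" using T0_nonneg[OF assms] .
      have "T0 q c (Suc n) = T0 q c n * (q^(2*n) * c / ((1 - q*q^n) * (1 - c*q^n)))"
        using T0_Suc[OF assms] .
      also have "\<dots> \<le> T0 q c n * (1/2)" using ratio t0 by (intro mult_left_mono) auto
      finally show "norm (T0 q c (Suc n)) \<le> 1/2 * norm (T0 q c n)"
        using t0 T0_nonneg[OF assms, of "Suc n"] by simp
    qed
  qed simp
qed


definition SS :: "real \<Rightarrow> real \<Rightarrow> real \<Rightarrow> real" where
  "SS q c b = suminf (tt q c b)"

locale qctx =
  fixes q c :: real
  assumes q0: "0 < q" and q1: "q < 1" and c0: "0 < c" and c1: "c < 1"
begin

definition KK :: real where "KK = q/(1-q) + 1 + q/(c*(1-q))"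

lemma tt_bounds:
  assumes "0 \<le> b" "b \<le> c / q"
  shows "0 \<le> tt q c b n" "tt q c b n \<le> T0 q c n" "(1 - b*KK) * T0 q c n \<le> tt q c b n"
  using FF_bounds[OF q0 q1 c0 c1 assms, of n] T0_nonneg[OF q0 q1 c0 c1, of n]
  unfolding tt_FF KK_def
  by (auto intro: mult_nonneg_nonneg mult_left_le_one_le mult_right_mono)

lemma summable_tt:
  assumes "0 \<le> b" "b \<le> c / q"
  shows "summable (tt q c b)"
  by (rule summable_comparison_test'[OF summable_T0[OF q0 q1 c0 c1], of 0])
     (use tt_bounds[OF assms] in auto)

lemma SS_bounds:
  assumes "0 \<le> b" "b \<le> c / q"
  shows "SS q c b \<le> SS q c 0" "(1 - b*KK) * SS q c 0 \<le> SS q c b" "1 \<le> SS q c b"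
proof -
  have s0: "summable (tt q c 0)" using summable_tt[of 0] q0 c0 by simp
  have t0: "tt q c 0 = T0 q c" by (rule ext) (simp add: tt_zero)
  show "SS q c b \<le> SS q c 0" unfolding SS_def
    by (rule suminf_le) (use tt_bounds[OF assms] summable_tt[OF assms] s0 t0 in auto)
  have "(1 - b*KK) * SS q c 0 = (\<Sum>n. (1 - b*KK) * T0 q c n)"
    unfolding SS_def t0 by (rule suminf_mult[symmetric]) (use s0 t0 in simp)
  also have "\<dots> \<le> SS q c b" unfolding SS_def
    by (rule suminf_le) (use tt_bounds[OF assms] summable_tt[OF assms] s0 t0 in
       \<open>auto intro: summable_mult\<close>)
  finally show "(1 - b*KK) * SS q c 0 \<le> SS q c b" .
  have "sum (tt q c b) {0} \<le> SS q c b" unfolding SS_def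
    by (rule sum_le_suminf) (use tt_bounds[OF assms] summable_tt[OF assms] in auto)
  thus "1 \<le> SS q c b" by (simp add: tt_def)
qed

lemma gg_bound:
  assumes "0 \<le> b" "b \<le> c / q"
  shows "0 \<le> gg q c b (Suc n)" "gg q c b (Suc n) \<le> b * T0 q c n"
proof -
  have bq2: "b*q^2/c \<le> q" using assms q0 c0 by (simp add: field_simps power2_eq_square)
  have bq: "b*q \<le> c" using assms q0 by (simp add: field_simps)
  have nn: "0 \<le> b*q^2/c" "0 \<le> b*q" using assms q0 c0 by auto
  have e: "Suc n * Suc n - Suc n + 1 = (n*n - n) + (2*n+1)" by (cases n) auto
  have qe: "q^(Suc n * Suc n - Suc n + 1) = q^(n*n - n) * q^(2*n+1)" by (simp only: e power_add)
  have g: "gg q c b (Suc n) = b * q^(2*n+1) * qp q (b*q) n * qp q (b*q^2/c) n * T0 q c n"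
    unfolding gg_def qe T0_def by simp
  have A: "0 \<le> qp q (b*q) n" "qp q (b*q) n \<le> 1"
    using qp_nonneg[of "b*q" q n] qp_le1[of "b*q" q n] nn bq c1 q0 q1 by auto
  have B: "0 \<le> qp q (b*q^2/c) n" "qp q (b*q^2/c) n \<le> 1"
    using qp_nonneg[of "b*q^2/c" q n] qp_le1[of "b*q^2/c" q n] nn bq2 q0 q1 by auto
  have C: "0 \<le> q^(2*n+1)" "q^(2*n+1) \<le> 1" using q0 q1 power_le_one[of q "2*n+1"] by auto
  have T: "0 \<le> T0 q c n" using T0_nonneg[OF q0 q1 c0 c1] .
  have P: "0 \<le> q^(2*n+1) * qp q (b*q) n * qp q (b*q^2/c) n"
          "q^(2*n+1) * qp q (b*q) n * qp q (b*q^2/c) n \<le> 1"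
    using A B C by (auto intro!: mult_nonneg_nonneg mult_le_one)
  have "0 \<le> b * (q^(2*n+1) * qp q (b*q) n * qp q (b*q^2/c) n) * T0 q c n"
    using mult_nonneg_nonneg[OF mult_nonneg_nonneg[OF assms(1) P(1)] T] .
  thus "0 \<le> gg q c b (Suc n)" unfolding g by (simp add: ac_simps)
  have "gg q c b (Suc n) = b * T0 q c n * (q^(2*n+1) * qp q (b*q) n * qp q (b*q^2/c) n)"
    unfolding g by (simp add: ac_simps)
  also have "\<dots> \<le> b * T0 q c n * 1" using P T assms by (intro mult_left_mono) auto
  finally show "gg q c b (Suc n) \<le> b * T0 q c n" by simp
qed

lemma SS_funeq:
  assumes "0 \<le> b" "b \<le> c / q"
  shows "SS q c b = (1 - b*q) * SS q c (b*q)"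
proof -
  have bq: "0 \<le> b*q" "b*q \<le> c/q" using assms q0 q1
    by (auto simp: mult_left_le intro: order_trans[OF _ assms(2)])
  have s1: "tt q c b sums SS q c b" unfolding SS_def by (rule summable_sums[OF summable_tt[OF assms]])
  have s2: "tt q c (b*q) sums SS q c (b*q)" unfolding SS_def by (rule summable_sums[OF summable_tt[OF bq]])
  have "(\<lambda>n. tt q c b n - (1 - b*q) * tt q c (b*q) n) sums (SS q c b - (1 - b*q) * SS q c (b*q))"
    by (intro sums_diff sums_mult s1 s2)
  moreover have "(\<lambda>n. tt q c b n - (1 - b*q) * tt q c (b*q) n) sums 0"
  proof -
    have lim1: "(\<lambda>n. gg q c b (Suc n)) \<longlonglongrightarrow> 0"
    proof (rule tendsto_sandwich[of "\<lambda>_. 0" _ _ "\<lambda>n. b * T0 q c n"])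
      show "\<forall>\<^sub>F n in sequentially. 0 \<le> gg q c b (Suc n)" using gg_bound[OF assms] by simp
      show "\<forall>\<^sub>F n in sequentially. gg q c b (Suc n) \<le> b * T0 q c n" using gg_bound[OF assms] by simp
      show "(\<lambda>n. b * T0 q c n) \<longlonglongrightarrow> 0"
        using tendsto_mult_right_zero[OF summable_LIMSEQ_zero[OF summable_T0[OF q0 q1 c0 c1]], of b] .
    qed simp
    hence lim: "gg q c b \<longlonglongrightarrow> 0" by (rule LIMSEQ_imp_Suc)
    have "(\<lambda>n. gg q c b (Suc n) - gg q c b n) sums (0 - gg q c b 0)" by (rule telescope_sums[OF lim])
    thus ?thesis using tele[OF q0 q1 c0 c1] by (simp add: gg_def)
  qed
  ultimately have "SS q c b - (1 - b*q) * SS q c (b*q) = 0" by (rule sums_unique2)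
  thus ?thesis by simp
qed

lemma SS_top: "SS q c (c/q) = 1"
proof -
  have "tt q c (c/q) = (\<lambda>n. if n = 0 then 1 else 0)"
  proof (rule ext)
    fix n
    show "tt q c (c/q) n = (if n = 0 then 1 else 0)"
    proof (cases n)
      case (Suc m)
      have "qp q (c/q*q/c) n = 0" unfolding Suc qp_Suc' using q0 c0 by simp
      thus ?thesis unfolding tt_def using Suc by simp
    qed (simp add: tt_def)
  qed
  moreover have "(\<lambda>n::nat. if n = 0 then 1 else (0::real)) sums 1"
    using sums_single[of 0 "\<lambda>_. 1::real"] by simp
  ultimately show ?thesis unfolding SS_def by (simp add: sums_iff)
qed

lemma SS_iter:
  assumes "0 \<le> b" "b \<le> c / q"
  shows "SS q c b = qp q (b*q) m * SS q c (b*q^m)"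
proof (induction m)
  case 0 then show ?case by simp
next
  case (Suc m)
  have bm: "0 \<le> b*q^m" "b*q^m \<le> c/q"
  proof -
    show "0 \<le> b*q^m" using assms q0 by simp
    have "q^m \<le> 1" using q0 q1 by (simp add: power_le_one)
    hence "b*q^m \<le> b" using assms by (simp add: mult_left_le)
    thus "b*q^m \<le> c/q" using assms by simp
  qed
  have "SS q c (b*q^m) = (1 - b*q^m*q) * SS q c (b*q^m*q)" by (rule SS_funeq[OF bm])
  hence "SS q c (b*q^m) = (1 - b*q*q^m) * SS q c (b*q^Suc m)" by (simp add: ac_simps)
  with Suc.IH show ?case by (simp add: qp_Suc)
qed

lemma SS_cont:
  assumes "\<And>m. 0 \<le> x m" "\<And>m. x m \<le> c / q" "x \<longlonglongrightarrow> 0"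
  shows "(\<lambda>m. SS q c (x m)) \<longlonglongrightarrow> SS q c 0"
proof (rule tendsto_sandwich[of "\<lambda>m. (1 - x m * KK) * SS q c 0" _ _ "\<lambda>_. SS q c 0"])
  show "\<forall>\<^sub>F n in sequentially. (1 - x n * KK) * SS q c 0 \<le> SS q c (x n)"
    using SS_bounds[OF assms(1,2)] by simp
  show "\<forall>\<^sub>F n in sequentially. SS q c (x n) \<le> SS q c 0"
    using SS_bounds[OF assms(1,2)] by simp
  have "(\<lambda>m. (1 - x m * KK) * SS q c 0) \<longlonglongrightarrow> (1 - 0 * KK) * SS q c 0"
    by (intro tendsto_intros assms(3))
  thus "(\<lambda>m. (1 - x m * KK) * SS q c 0) \<longlonglongrightarrow> SS q c 0" by simp
qed simp

lemma qp_ratio_lim: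
  assumes "0 \<le> b" "b \<le> c / q"
  shows "(\<lambda>m. qp q (b*q) m / qp q c m) \<longlonglongrightarrow> SS q c b"
proof -
  have top: "0 \<le> c/q" "c/q \<le> c/q" using c0 q0 by auto
  have cq: "c/q*q = c" using q0 by simp
  have qn: "(\<lambda>m. q^m) \<longlonglongrightarrow> 0" using q0 q1 by (intro LIMSEQ_power_zero) auto
  have qle: "q^m \<le> 1" for m using q0 q1 by (simp add: power_le_one)
  have l1: "(\<lambda>m. SS q c (b*q^m)) \<longlonglongrightarrow> SS q c 0"
  proof (rule SS_cont)
    show "0 \<le> b*q^m" for m using assms q0 by simp
    show "b*q^m \<le> c/q" for m using mult_left_le[OF qle assms(1), of m] assms by simp
    show "(\<lambda>m. b*q^m) \<longlonglongrightarrow> 0" using tendsto_mult_right_zero[OF qn, of b] .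
  qed
  have l2: "(\<lambda>m. SS q c (c/q*q^m)) \<longlonglongrightarrow> SS q c 0"
  proof (rule SS_cont)
    show "0 \<le> c/q*q^m" for m using c0 q0 by simp
    show "c/q*q^m \<le> c/q" for m using mult_left_le[OF qle top(1), of m] by simp
    show "(\<lambda>m. c/q*q^m) \<longlonglongrightarrow> 0" using tendsto_mult_right_zero[OF qn, of "c/q"] .
  qed
  have S0: "SS q c 0 \<noteq> 0" using SS_bounds(3)[of 0] q0 c0 by simp
  have eq: "qp q (b*q) m / qp q c m = SS q c b * SS q c (c/q*q^m) / SS q c (b*q^m)" for m
  proof -
    have a: "SS q c b = qp q (b*q) m * SS q c (b*q^m)" by (rule SS_iter[OF assms])
    have b: "1 = qp q c m * SS q c (c/q*q^m)" using SS_iter[OF top, of m] unfolding SS_top cq .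
    have p1: "SS q c (b*q^m) \<ge> 1"
      using SS_bounds(3)[of "b*q^m"] mult_left_le[OF qle assms(1), of m] assms q0 by simp
    have p2: "SS q c (c/q*q^m) \<ge> 1"
      using SS_bounds(3)[of "c/q*q^m"] mult_left_le[OF qle top(1), of m] c0 q0 by simp
    have "qp q c m \<noteq> 0" using b by auto
    thus ?thesis using a b p1 p2 by (simp add: field_simps)
  qed
  have "(\<lambda>m. SS q c b * SS q c (c/q*q^m) / SS q c (b*q^m)) \<longlonglongrightarrow> SS q c b * SS q c 0 / SS q c 0"
    by (intro tendsto_intros l1 l2 S0)
  thus ?thesis unfolding eq using S0 by simp
qed

end



definition zbg :: "real \<Rightarrow> real \<Rightarrow> real \<Rightarrow> real \<Rightarrow> real \<Rightarrow> nat list \<Rightarrow> real" where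
  "zbg Q z d c e xs =
     (\<Prod>j\<in>{1..length xs}.
        let x = real (xs ! (j - 1));
            prev = (if j = 1 then c else real (xs ! (j - 2)));
            t = sum_list (drop (j - 1) xs)
        in Q powr (x * (x - 1) / 2 + (real j + d) * x + prev * real t) * z powr (e * x)
           / (1 - Q ^ t))"

lemma zblock_zbg: "zblock Q z c e xs = zbg Q z 0 c e xs"
  unfolding zblock_def zbg_def by simp

lemma zbg_Nil: "zbg Q z d c e [] = 1"
  unfolding zbg_def by simp

lemma zbg_Cons: "zbg Q z d c e (x # xs) =
   Q powr (real x * (real x - 1) / 2 + (1 + d) * real x + c * real (x + sum_list xs)) * z powr (e * real x)
     / (1 - Q ^ (x + sum_list xs)) * zbg Q z (d + 1) (real x) e xs"
proof -
  let ?f = "\<lambda>ys d c j. let x = real (ys ! (j - 1));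
            prev = (if j = 1 then c else real (ys ! (j - 2)));
            t = sum_list (drop (j - 1) ys)
        in Q powr (x * (x - 1) / 2 + (real j + d) * x + prev * real t) * z powr (e * x)
           / (1 - Q ^ t)"
  have "zbg Q z d c e (x # xs) = prod (?f (x#xs) d c) {1..Suc (length xs)}"
    unfolding zbg_def by simp
  also have "\<dots> = ?f (x#xs) d c 1 * prod (?f (x#xs) d c) {Suc 1..Suc (length xs)}"
    by (rule prod.atLeast_Suc_atMost) simp
  also have "prod (?f (x#xs) d c) {Suc 1..Suc (length xs)} = prod (\<lambda>j. ?f (x#xs) d c (Suc j)) {1..length xs}"
    by (rule prod.shift_bounds_cl_Suc_ivl)
  also have "\<dots> = prod (?f xs (d+1) (real x)) {1..length xs}"
  proof (rule prod.cong[OF refl])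
    fix j assume j: "j \<in> {1..length xs}"
    then obtain k where k: "j = Suc k" by (cases j) auto
    have a: "(x#xs) ! (Suc j - 1) = xs ! (j - 1)" using k by simp
    have b: "(if Suc j = 1 then c else real ((x#xs) ! (Suc j - 2))) = (if j = 1 then real x else real (xs ! (j - 2)))"
      using k by (cases k) auto
    have cc: "drop (Suc j - 1) (x#xs) = drop (j - 1) xs" using k by simp
    have dd: "real (Suc j) + d = real j + (d + 1)" by simp
    show "?f (x#xs) d c (Suc j) = ?f xs (d+1) (real x) j"
      unfolding Let_def a b cc dd ..
  qed
  also have "prod (?f xs (d+1) (real x)) {1..length xs} = zbg Q z (d+1) (real x) e xs"
    unfolding zbg_def ..
  also have "?f (x#xs) d c 1 = Q powr (real x * (real x - 1) / 2 + (1 + d) * real x + c * real (x + sum_list xs)) * z powr (e * real x)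
     / (1 - Q ^ (x + sum_list xs))"
    by (simp add: Let_def add_ac)
  finally show ?thesis .
qed

definition xq :: "real \<Rightarrow> nat \<Rightarrow> real" where
  "xq Q t = Q ^ t / (1 - Q ^ t)"

fun tp :: "real \<Rightarrow> nat list \<Rightarrow> real" where
  "tp Q [] = 1"
| "tp Q (x # xs) = xq Q (x + sum_list xs) * tp Q xs"

lemma zbg_closed:
  assumes "0 < Q" "0 < z"
  shows "zbg Q z d c e xs = Q powr (real (sum_list xs) * (real (sum_list xs) - 1) / 2
      + c * real (sum_list xs) + d * real (sum_list xs)) * z powr (e * real (sum_list xs)) * tp Q xs"
proof (induction xs arbitrary: d c)
  case Nil
  then show ?case using assms by (simp add: zbg_Nil)
next
  case (Cons x xs)
  define M where "M = sum_list xs"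
  have IH: "zbg Q z (d+1) (real x) e xs = Q powr (real M * (real M - 1) / 2
      + real x * real M + (d+1) * real M) * z powr (e * real M) * tp Q xs"
    using Cons.IH[of "d+1" "real x"] by (simp add: M_def)
  have qp: "Q ^ (x + M) = Q powr real (x + M)" by (rule powr_realpow[symmetric, OF assms(1)])
  have ex: "real x * (real x - 1) / 2 + (1 + d) * real x + c * real (x + M)
      + (real M * (real M - 1) / 2 + real x * real M + (d+1) * real M)
      = (real (x+M) * (real (x+M) - 1) / 2 + c * real (x+M) + d * real (x+M)) + real (x + M)"
    by (simp add: field_simps)
  have "zbg Q z d c e (x # xs) =
     Q powr (real x * (real x - 1) / 2 + (1 + d) * real x + c * real (x + M)) * z powr (e * real x)
     / (1 - Q ^ (x + M)) * (Q powr (real M * (real M - 1) / 2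
      + real x * real M + (d+1) * real M) * z powr (e * real M) * tp Q xs)"
    unfolding zbg_Cons IH M_def ..
  also have "\<dots> = (Q powr (real x * (real x - 1) / 2 + (1 + d) * real x + c * real (x + M))
      * Q powr (real M * (real M - 1) / 2 + real x * real M + (d+1) * real M))
      * (z powr (e * real x) * z powr (e * real M)) / (1 - Q ^ (x + M)) * tp Q xs"
    using assms by (simp add: field_simps)
  also have "\<dots> = Q powr (real (x+M) * (real (x+M) - 1) / 2 + c * real (x+M) + d * real (x+M))
      * z powr (e * real (x + M)) * (Q ^ (x + M) / (1 - Q ^ (x + M))) * tp Q xs"
  proof -
    have e1: "Q powr (real x * (real x - 1) / 2 + (1 + d) * real x + c * real (x + M))
      * Q powr (real M * (real M - 1) / 2 + real x * real M + (d+1) * real M)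
      = Q powr (real (x+M) * (real (x+M) - 1) / 2 + c * real (x+M) + d * real (x+M)) * Q ^ (x + M)"
      unfolding qp powr_add[symmetric] ex ..
    have e2: "z powr (e * real x) * z powr (e * real M) = z powr (e * real (x + M))"
      unfolding powr_add[symmetric] by (simp add: algebra_simps)
    show ?thesis unfolding e1 e2 by simp
  qed
  finally show ?case by (simp add: M_def xq_def)
qed

lemma zblock_closed:
  assumes "0 < Q" "0 < z"
  shows "zblock Q z c e xs = Q powr (real (sum_list xs) * (real (sum_list xs) - 1) / 2
      + c * real (sum_list xs)) * z powr (e * real (sum_list xs)) * tp Q xs"
  unfolding zblock_zbg zbg_closed[OF assms] by simp


definition CL :: "nat \<Rightarrow> nat list set" where
  "CL N = {xs. (\<forall>x\<in>set xs. 1 \<le> x) \<and> sum_list xs = N}"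

lemma length_le_sum_pos: "(\<forall>x\<in>set xs. 1 \<le> (x::nat)) \<Longrightarrow> length xs \<le> sum_list xs"
  by (induction xs) auto

lemma CL_finite: "finite (CL N)"
proof (rule finite_subset)
  show "CL N \<subseteq> {xs. set xs \<subseteq> {0..N} \<and> length xs \<le> N}"
    unfolding CL_def using length_le_sum_pos member_le_sum_list by fastforce
  show "finite {xs. set xs \<subseteq> {0..N} \<and> length xs \<le> N}"
    by (rule finite_lists_length_le) simp
qed

lemma CL_0: "CL 0 = {[]}"
proof -
  have "xs = []" if "\<forall>x\<in>set xs. 1 \<le> x" "sum_list xs = 0" for xs :: "nat list"
    using that by (cases xs) auto
  thus ?thesis unfolding CL_def by auto
qed

lemma CL_Suc: "CL (Suc n) = (\<lambda>(x,xs). x#xs) ` (SIGMA x:{1..Suc n}. CL (Suc n - x))"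
proof (intro equalityI subsetI)
  fix xs assume "xs \<in> CL (Suc n)"
  hence xs: "\<forall>x\<in>set xs. 1 \<le> x" "sum_list xs = Suc n" unfolding CL_def by auto
  then obtain x ys where e: "xs = x # ys" by (cases xs) auto
  have "x \<in> {1..Suc n}" using xs e by auto
  moreover have "ys \<in> CL (Suc n - x)" using xs e unfolding CL_def by auto
  ultimately show "xs \<in> (\<lambda>(x,xs). x#xs) ` (SIGMA x:{1..Suc n}. CL (Suc n - x))"
    using e by force
next
  fix xs assume "xs \<in> (\<lambda>(x,xs). x#xs) ` (SIGMA x:{1..Suc n}. CL (Suc n - x))"
  then obtain x ys where "xs = x # ys" "x \<in> {1..Suc n}" "ys \<in> CL (Suc n - x)" by auto
  thus "xs \<in> CL (Suc n)" unfolding CL_def by auto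
qed

definition wt :: "real \<Rightarrow> real \<Rightarrow> nat list \<Rightarrow> real" where
  "wt Q y xs = y ^ length xs * tp Q xs"

definition WW :: "real \<Rightarrow> real \<Rightarrow> nat \<Rightarrow> real" where
  "WW Q y N = (\<Sum>xs\<in>CL N. wt Q y xs)"

definition Pn :: "real \<Rightarrow> real \<Rightarrow> nat \<Rightarrow> real" where
  "Pn Q y n = (\<Prod>i<n. 1 + y * xq Q (Suc i))"

lemma WW_0: "WW Q y 0 = 1"
  unfolding WW_def CL_0 by (simp add: wt_def)

lemma WW_Suc_sum: "WW Q y (Suc n) = y * xq Q (Suc n) * (\<Sum>m<Suc n. WW Q y m)"
proof -
  have inj: "inj_on (\<lambda>(x,xs). x#xs) (SIGMA x:{1..Suc n}. CL (Suc n - x))"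
    by (auto simp: inj_on_def)
  have "WW Q y (Suc n) = (\<Sum>(x,xs)\<in>(SIGMA x:{1..Suc n}. CL (Suc n - x)). wt Q y (x#xs))"
    unfolding WW_def CL_Suc by (subst sum.reindex[OF inj]) (auto simp: o_def intro!: sum.cong)
  also have "\<dots> = (\<Sum>x\<in>{1..Suc n}. \<Sum>xs\<in>CL (Suc n - x). wt Q y (x#xs))"
    by (subst sum.Sigma) (auto simp: CL_finite)
  also have "\<dots> = (\<Sum>x\<in>{1..Suc n}. \<Sum>xs\<in>CL (Suc n - x). y * xq Q (Suc n) * wt Q y xs)"
  proof (intro sum.cong refl)
    fix x xs assume "x \<in> {1..Suc n}" "xs \<in> CL (Suc n - x)"
    hence "x + sum_list xs = Suc n" unfolding CL_def by auto
    thus "wt Q y (x#xs) = y * xq Q (Suc n) * wt Q y xs" by (simp add: wt_def)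
  qed
  also have "\<dots> = y * xq Q (Suc n) * (\<Sum>x\<in>{1..Suc n}. WW Q y (Suc n - x))"
    unfolding WW_def sum_distrib_left ..
  also have "(\<Sum>x\<in>{1..Suc n}. WW Q y (Suc n - x)) = (\<Sum>i<Suc n. WW Q y (Suc n - Suc i))"
    by (simp add: sum.atLeast1_atMost_eq)
  also have "\<dots> = (\<Sum>m<Suc n. WW Q y m)"
    by (rule sum.nat_diff_reindex)
  finally show ?thesis .
qed

lemma sum_WW: "(\<Sum>m<Suc n. WW Q y m) = Pn Q y n"
proof (induction n)
  case 0 then show ?case by (simp add: WW_0 Pn_def)
next
  case (Suc n)
  have "(\<Sum>m<Suc (Suc n). WW Q y m) = (\<Sum>m<Suc n. WW Q y m) + WW Q y (Suc n)" by simp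
  also have "\<dots> = Pn Q y n + y * xq Q (Suc n) * Pn Q y n" unfolding WW_Suc_sum Suc.IH ..
  also have "\<dots> = Pn Q y (Suc n)" by (simp add: Pn_def algebra_simps)
  finally show ?case .
qed

lemma WW_Suc: "WW Q y (Suc n) = y * xq Q (Suc n) * Pn Q y n"
  unfolding WW_Suc_sum sum_WW ..



definition Fy :: "real \<Rightarrow> real \<Rightarrow> nat \<Rightarrow> real" where
  "Fy Q y t = (1 - 1/y) * Q^t + 1/y"

lemma qp_add: "qp q x (m + n) = qp q x m * qp q (x * q^m) n"
  by (induction n) (simp_all add: qp_Suc power_add algebra_simps)

lemma Pn_qp:
  assumes "0 < Q" "Q < 1"
  shows "Pn Q y n = qp Q ((1-y)*Q) n / qp Q Q n"
proof (induction n)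
  case 0 then show ?case by (simp add: Pn_def)
next
  case (Suc n)
  have d: "1 - Q * Q^n \<noteq> 0"
  proof -
    have "Q * Q^n < 1" using assms by (metis power_Suc power_less_one_iff zero_less_Suc less_imp_le) 
    thus ?thesis by simp
  qed
  have "Pn Q y (Suc n) = Pn Q y n * (1 + y * xq Q (Suc n))" by (simp add: Pn_def)
  also have "1 + y * xq Q (Suc n) = (1 - (1-y)*Q*Q^n) / (1 - Q*Q^n)"
    unfolding xq_def using d by (simp add: field_simps)
  finally show ?case unfolding Suc qp_Suc by simp
qed

lemma WW_Suc_qp:
  assumes "0 < Q" "Q < 1"
  shows "WW Q y (Suc n) = y * Q^(Suc n) * qp Q ((1-y)*Q) n / qp Q Q (Suc n)"
proof -
  have d: "1 - Q * Q^n \<noteq> 0"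
  proof -
    have "Q * Q^n < 1" using assms by (metis power_Suc power_less_one_iff zero_less_Suc less_imp_le)
    thus ?thesis by simp
  qed
  show ?thesis unfolding WW_Suc Pn_qp[OF assms] xq_def qp_Suc using d by (simp add: field_simps)
qed


definition core :: "real \<Rightarrow> real \<Rightarrow> nat \<Rightarrow> nat \<Rightarrow> real" where
  "core Q y n j = WW Q y n * WW Q y (n+j)
     * Q powr (real n * (real n - 1) / 2 - real n + real (n+j) * (real (n+j) - 1) / 2)
     * Fy Q y (n + (n+j))"

lemma core_alg:
  fixes y Am Amj Aj Dm1 Dmj1 Dj X P1 P2 P3 P4 P5 P6 :: real
  assumes "y \<noteq> 0" "Aj \<noteq> 0" "Dj \<noteq> 0" "Dm1 \<noteq> 0" "Dmj1 \<noteq> 0" "P1 \<noteq> 0" "P2 \<noteq> 0"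
    and P: "P1 * P2 * P3 = P4 * P5 * P6"
  shows "(y*P1*Am/Dm1) * (y*P2*Amj/Dmj1) * P3 * (X/y)
       = P4 * (Aj/Dj) * ((Amj/Aj) * X * (y*Am) * P5 * P6 / (Dm1 * (Dmj1/Dj)))"
proof -
  have P3: "P3 = P4 * P5 * P6 / (P1 * P2)" using P assms by (simp add: field_simps)
  show ?thesis unfolding P3 using assms by (simp add: field_simps)
qed

lemma Fy_eq:
  assumes "y \<noteq> 0"
  shows "Fy Q y t = (1 - (1-y)*Q^t) / y"
  unfolding Fy_def using assms by (simp add: field_simps)

lemma core_tt:
  assumes Q: "0 < Q" "Q < 1" and y: "0 < y" "y \<le> 1"
  shows "core Q y n j = Q powr (real j * (real j + 1) / 2) * Pn Q y j * tt Q (Q^Suc j) ((1-y)*Q^j) n"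
proof -
  define A where "A k = qp Q ((1-y)*Q) k" for k
  define D where "D k = qp Q Q k" for k
  have aq: "0 \<le> (1-y)*Q" "(1-y)*Q < 1"
  proof -
    show "0 \<le> (1-y)*Q" using Q y by simp
    have "(1-y)*Q \<le> Q" using Q y by (intro mult_left_le_one_le) auto
    thus "(1-y)*Q < 1" using Q by linarith
  qed
  have A0: "A k > 0" for k
    unfolding A_def using Q aq by (intro qp_pos) auto
  have D0: "D k > 0" for k
    unfolding D_def using Q by (intro qp_pos) auto
  have P: "Pn Q y k = A k / D k" for k unfolding A_def D_def by (rule Pn_qp[OF Q])
  have W: "WW Q y (Suc k) = y * Q^(Suc k) * A k / D (Suc k)" for k
    unfolding A_def D_def by (rule WW_Suc_qp[OF Q])
  have Qpow: "Q^k = Q powr real k" for k using Q by (simp add: powr_realpow)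
  show ?thesis
  proof (cases n)
    case 0
    show ?thesis
    proof (cases j)
      case 0
      then show ?thesis using \<open>n = 0\<close> by (simp add: core_def WW_0 Fy_def tt_def Pn_def)
    next
      case (Suc i)
      have "core Q y n j = (y * Q^(Suc i) * A i / D (Suc i)) * Q powr (real j * (real j - 1) / 2)
          * ((1 - (1-y)*Q^(Suc i)) / y)"
        using y by (simp add: core_def \<open>n = 0\<close> Suc W Fy_eq WW_0)
      also have "\<dots> = (Q^(Suc i) * Q powr (real j * (real j - 1) / 2)) * (A i * (1 - (1-y)*Q*Q^i) / D (Suc i))"
        using y D0[of "Suc i"] by (simp add: field_simps)
      also have "A i * (1 - (1-y)*Q*Q^i) = A j" unfolding Suc A_def qp_Suc ..
      also have "Q^(Suc i) * Q powr (real j * (real j - 1) / 2) = Q powr (real j * (real j + 1) / 2)"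
        unfolding Qpow powr_add[symmetric] Suc by (simp add: field_simps)
      finally show ?thesis unfolding \<open>n = 0\<close> P Suc by (simp add: tt_def)
    qed
  next
    case (Suc m)
    have F: "Fy Q y (Suc m + (Suc m + j)) = (1 - (1-y)*Q^(2*m+2+j)) / y"
      using Fy_eq[of y Q] y by (simp add: add_ac mult_2)
    have W2: "WW Q y (Suc m + j) = y * Q^(Suc m + j) * A (m+j) / D (Suc m + j)"
      using W[of "m+j"] by simp
    have lhs: "core Q y n j = (y * Q^(Suc m) * A m / D (Suc m)) * (y * Q^(Suc m + j) * A (m+j) / D (Suc m + j))
       * Q powr (real (Suc m) * (real (Suc m) - 1) / 2 - real (Suc m) + real (Suc m + j) * (real (Suc m + j) - 1) / 2)
       * ((1 - (1-y)*Q^(2*m+2+j)) / y)"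
      unfolding core_def Suc W W2 F ..
    have t1: "qp Q ((1-y)*Q^j*Q) m = A (m+j) / A j"
    proof -
      have "A (j+m) = A j * qp Q ((1-y)*Q*Q^j) m" unfolding A_def by (rule qp_add)
      moreover have "(1-y)*Q*Q^j = (1-y)*Q^j*Q" by (simp add: ac_simps)
      ultimately show ?thesis using A0[of j] by (simp add: field_simps add.commute)
    qed
    have t2: "1 - (1-y)*Q^j * Q^(2*Suc m) = 1 - (1-y)*Q^(2*m+2+j)"
      by (simp add: power_add[symmetric] add_ac mult_2)
    have t3: "qp Q ((1-y)*Q^j*Q / Q^Suc j) (Suc m) = y * A m"
    proof -
      have "(1-y)*Q^j*Q / Q^Suc j = 1-y" using Q by simp
      thus ?thesis unfolding A_def qp_Suc' by simp
    qed
    have t4: "qp Q (Q^Suc j) (Suc m) = D (Suc m + j) / D j"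
    proof -
      have "D (j + Suc m) = D j * qp Q (Q*Q^j) (Suc m)" unfolding D_def by (rule qp_add)
      thus ?thesis using D0[of j] by (simp add: field_simps add.commute)
    qed
    have rhs: "tt Q (Q^Suc j) ((1-y)*Q^j) n = (A (m+j) / A j) * (1 - (1-y)*Q^(2*m+2+j)) * (y * A m)
        * Q^(Suc m * Suc m - Suc m) * (Q^Suc j)^(Suc m) / (D (Suc m) * (D (Suc m + j) / D j))"
      unfolding tt_def Suc using t1 t2 t3 t4 by (simp add: D_def)
    have pw: "Q^(Suc m) * Q^(Suc m + j) * Q powr (real (Suc m) * (real (Suc m) - 1) / 2 - real (Suc m) + real (Suc m + j) * (real (Suc m + j) - 1) / 2)
       = Q powr (real j * (real j + 1) / 2) * Q^(Suc m * Suc m - Suc m) * (Q^Suc j)^(Suc m)"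
    proof -
      have e: "Suc m * Suc m - Suc m = m * Suc m" by simp
      have L: "Q^(Suc m) * Q^(Suc m + j) = Q powr real (Suc m + (Suc m + j))"
        unfolding power_add[symmetric] by (rule Qpow)
      have R: "Q^(Suc m * Suc m - Suc m) * (Q^Suc j)^(Suc m) = Q powr real (m * Suc m + Suc j * Suc m)"
        unfolding e power_mult[symmetric] power_add[symmetric] by (rule Qpow)
      have ex: "real (Suc m + (Suc m + j)) + (real (Suc m) * (real (Suc m) - 1) / 2 - real (Suc m) + real (Suc m + j) * (real (Suc m + j) - 1) / 2)
          = real j * (real j + 1) / 2 + real (m * Suc m + Suc j * Suc m)"
        by (simp add: field_simps)
      show ?thesis unfolding L mult.assoc[of "Q powr (real j * (real j + 1) / 2)"] R powr_add[symmetric] ex ..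
    qed
    show ?thesis unfolding lhs rhs P
      by (rule core_alg[OF _ _ _ _ _ _ _ pw]) (use y Q A0[of j] D0[of j] D0[of "Suc m"] D0[of "Suc (m+j)"] D0[of "Suc m + j"] in auto)
  qed
qed


lemma qpow_lt1:
  assumes "0 < (Q::real)" "Q < 1"
  shows "Q^Suc j < 1" "Q * Q^j < 1"
proof -
  have "Q^j \<le> 1" using assms by (simp add: power_le_one)
  hence "Q * Q^j \<le> Q" using assms by (simp add: mult_left_le)
  thus "Q * Q^j < 1" using assms by linarith
  thus "Q^Suc j < 1" by simp
qed

lemma core_facts:
  assumes Q: "0 < Q" "Q < 1" and y: "0 < y" "y \<le> 1"
  shows "(\<lambda>n. core Q y n j) sums (Q powr (real j * (real j + 1) / 2) * Pn Q y j * SS Q (Q^Suc j) ((1-y)*Q^j))"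
    "(\<lambda>m. Pn Q y (m + j)) \<longlonglongrightarrow> Pn Q y j * SS Q (Q^Suc j) ((1-y)*Q^j)"
proof -
  have c: "0 < Q^Suc j" "Q^Suc j < 1" using Q qpow_lt1[OF Q, of j] by auto
  interpret qctx Q "Q^Suc j" using Q c by unfold_locales auto
  have b: "0 \<le> (1-y)*Q^j" "(1-y)*Q^j \<le> Q^Suc j / Q"
  proof -
    show "0 \<le> (1-y)*Q^j" using Q y by simp
    have "(1-y)*Q^j \<le> Q^j" using Q y by (intro mult_left_le_one_le) auto
    thus "(1-y)*Q^j \<le> Q^Suc j / Q" using Q by simp
  qed
  have "tt Q (Q^Suc j) ((1-y)*Q^j) sums SS Q (Q^Suc j) ((1-y)*Q^j)"
    unfolding SS_def by (rule summable_sums[OF summable_tt[OF b]])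
  hence "(\<lambda>n. Q powr (real j * (real j + 1) / 2) * Pn Q y j * tt Q (Q^Suc j) ((1-y)*Q^j) n) sums
      (Q powr (real j * (real j + 1) / 2) * Pn Q y j * SS Q (Q^Suc j) ((1-y)*Q^j))"
    by (rule sums_mult)
  thus "(\<lambda>n. core Q y n j) sums (Q powr (real j * (real j + 1) / 2) * Pn Q y j * SS Q (Q^Suc j) ((1-y)*Q^j))"
    unfolding core_tt[OF Q y] .
  have aq: "0 \<le> (1-y)*Q" "(1-y)*Q < 1"
  proof -
    show "0 \<le> (1-y)*Q" using Q y by simp
    have "(1-y)*Q \<le> Q" using Q y by (intro mult_left_le_one_le) auto
    thus "(1-y)*Q < 1" using Q by linarith
  qed
  have eq: "Pn Q y (m + j) = Pn Q y j * (qp Q ((1-y)*Q^j*Q) m / qp Q (Q^Suc j) m)" for m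
  proof -
    have A: "qp Q ((1-y)*Q) (j + m) = qp Q ((1-y)*Q) j * qp Q ((1-y)*Q^j*Q) m"
      using qp_add[of Q "(1-y)*Q" j m] by (simp add: ac_simps)
    have D: "qp Q Q (j + m) = qp Q Q j * qp Q (Q^Suc j) m"
      using qp_add[of Q Q j m] by (simp add: ac_simps)
    have nz: "qp Q Q j \<noteq> 0" "qp Q (Q^Suc j) m \<noteq> 0" "qp Q ((1-y)*Q) j \<noteq> 0"
      using qp_pos[of Q Q j] qp_pos[of "Q^Suc j" Q m] qp_pos[of "(1-y)*Q" Q j] Q c aq by auto
    show ?thesis unfolding Pn_qp[OF Q] add.commute[of m j] A D using nz by (simp add: field_simps)
  qed
  have "(\<lambda>m. qp Q ((1-y)*Q^j*Q) m / qp Q (Q^Suc j) m) \<longlonglongrightarrow> SS Q (Q^Suc j) ((1-y)*Q^j)"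
    by (rule qp_ratio_lim[OF b])
  thus "(\<lambda>m. Pn Q y (m + j)) \<longlonglongrightarrow> Pn Q y j * SS Q (Q^Suc j) ((1-y)*Q^j)"
    unfolding eq by (intro tendsto_intros)
qed

definition Pinf :: "real \<Rightarrow> real \<Rightarrow> real" where
  "Pinf Q y = lim (Pn Q y)"

lemma Pn_ge1:
  assumes "0 < Q" "Q < 1" "0 \<le> y"
  shows "1 \<le> Pn Q y n"
  unfolding Pn_def
proof (rule prod_ge_1)
  fix i assume "i \<in> {..<n}"
  have "Q^Suc i < 1" using qpow_lt1[of Q i] assms by simp
  hence "0 \<le> xq Q (Suc i)" unfolding xq_def using assms by simp
  thus "1 \<le> 1 + y * xq Q (Suc i)" using assms by simp
qed

lemma Pn_lim:
  assumes Q: "0 < Q" "Q < 1" and y: "0 < y" "y \<le> 1"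
  shows "Pn Q y \<longlonglongrightarrow> Pinf Q y" "1 \<le> Pinf Q y"
    "Pn Q y j * SS Q (Q^Suc j) ((1-y)*Q^j) = Pinf Q y"
proof -
  have "(\<lambda>m. Pn Q y (m + 0)) \<longlonglongrightarrow> Pn Q y 0 * SS Q (Q^Suc 0) ((1-y)*Q^0)"
    by (rule core_facts(2)[OF Q y])
  hence conv: "convergent (Pn Q y)" unfolding convergent_def by auto
  thus L: "Pn Q y \<longlonglongrightarrow> Pinf Q y" unfolding Pinf_def by (rule convergent_LIMSEQ_iff[THEN iffD1])
  show "1 \<le> Pinf Q y"
    by (rule LIMSEQ_le_const[OF L]) (use Pn_ge1[of Q y] Q y in auto)
  have "(\<lambda>m. Pn Q y (m + j)) \<longlonglongrightarrow> Pinf Q y" by (rule LIMSEQ_ignore_initial_segment[OF L])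
  moreover have "(\<lambda>m. Pn Q y (m + j)) \<longlonglongrightarrow> Pn Q y j * SS Q (Q^Suc j) ((1-y)*Q^j)"
    by (rule core_facts(2)[OF Q y])
  ultimately show "Pn Q y j * SS Q (Q^Suc j) ((1-y)*Q^j) = Pinf Q y" using LIMSEQ_unique by auto
qed

lemma core_sums:
  assumes Q: "0 < Q" "Q < 1" and y: "0 < y" "y \<le> 1"
  shows "(\<lambda>n. core Q y n j) sums (Q powr (real j * (real j + 1) / 2) * Pinf Q y)"
  using core_facts(1)[OF Q y, of j] Pn_lim(3)[OF Q y, of j] by (simp add: mult.assoc)



lemma zterm_eq:
  assumes "0 < Q" "0 < z"
  shows "zterm Q z y (ls, ms) = wt Q y ls * wt Q y ms
     * Q powr (real (sum_list ls) * (real (sum_list ls) - 1) / 2 - real (sum_list ls)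
               + real (sum_list ms) * (real (sum_list ms) - 1) / 2)
     * z powr (real (sum_list ms) - real (sum_list ls)) * Fy Q y (sum_list ls + sum_list ms)"
proof -
  define N where "N = real (sum_list ls)"
  define M where "M = real (sum_list ms)"
  have f1: "Q powr (N * (N - 1) / 2 + - 1 * N) * Q powr (M * (M - 1) / 2 + 0 * M)
      = Q powr (N * (N - 1) / 2 - N + M * (M - 1) / 2)"
    unfolding powr_add[symmetric] by (simp add: algebra_simps)
  have f2: "z powr (-1 * N) * z powr (1 * M) = z powr (M - N)"
    unfolding powr_add[symmetric] by (simp add: algebra_simps)
  have "zterm Q z y (ls, ms) = (Q powr (N * (N - 1) / 2 + - 1 * N) * Q powr (M * (M - 1) / 2 + 0 * M))
     * (z powr (-1 * N) * z powr (1 * M)) * (wt Q y ls * wt Q y ms * Fy Q y (sum_list ls + sum_list ms))"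
    unfolding zterm_def prod.case zblock_closed[OF assms] wt_def Fy_def N_def M_def
    by (simp only: power_add ac_simps)
  also have "\<dots> = wt Q y ls * wt Q y ms * Q powr (N * (N - 1) / 2 - N + M * (M - 1) / 2)
     * z powr (M - N) * Fy Q y (sum_list ls + sum_list ms)"
    unfolding f1 f2 by (simp only: ac_simps)
  finally show ?thesis unfolding N_def M_def .
qed

definition hh :: "real \<Rightarrow> real \<Rightarrow> real \<Rightarrow> nat \<Rightarrow> nat \<Rightarrow> real" where
  "hh Q z y N M = WW Q y N * WW Q y M
     * Q powr (real N * (real N - 1) / 2 - real N + real M * (real M - 1) / 2)
     * z powr (real M - real N) * Fy Q y (N + M)"

lemma sum_zterm:
  assumes "0 < Q" "0 < z"
  shows "(\<Sum>p\<in>CL N \<times> CL M. zterm Q z y p) = hh Q z y N M"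
proof -
  have "(\<Sum>p\<in>CL N \<times> CL M. zterm Q z y p) = (\<Sum>ls\<in>CL N. \<Sum>ms\<in>CL M. zterm Q z y (ls, ms))"
    by (simp add: sum.cartesian_product)
  also have "\<dots> = (\<Sum>ls\<in>CL N. \<Sum>ms\<in>CL M. wt Q y ls * wt Q y ms *
      (Q powr (real N * (real N - 1) / 2 - real N + real M * (real M - 1) / 2)
     * z powr (real M - real N) * Fy Q y (N + M)))"
  proof (intro sum.cong refl)
    fix ls ms assume "ls \<in> CL N" "ms \<in> CL M"
    hence "sum_list ls = N" "sum_list ms = M" unfolding CL_def by auto
    thus "zterm Q z y (ls, ms) = wt Q y ls * wt Q y ms *
      (Q powr (real N * (real N - 1) / 2 - real N + real M * (real M - 1) / 2)
     * z powr (real M - real N) * Fy Q y (N + M))"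
      unfolding zterm_eq[OF assms] by (simp add: ac_simps)
  qed
  also have "\<dots> = (\<Sum>ls\<in>CL N. \<Sum>ms\<in>CL M. wt Q y ls * wt Q y ms) *
      (Q powr (real N * (real N - 1) / 2 - real N + real M * (real M - 1) / 2)
     * z powr (real M - real N) * Fy Q y (N + M))"
    by (simp only: sum_distrib_right)
  also have "\<dots> = hh Q z y N M"
    unfolding hh_def WW_def sum_product by (simp only: mult.assoc)
  finally show ?thesis .
qed


lemma xq_nonneg: "0 < Q \<Longrightarrow> Q < 1 \<Longrightarrow> 0 \<le> xq Q t"
  unfolding xq_def by (cases t) (auto simp: qpow_lt1 less_imp_le simp del: power_Suc)

lemma tp_nonneg: "0 < Q \<Longrightarrow> Q < 1 \<Longrightarrow> 0 \<le> tp Q xs"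
  by (induction xs) (auto simp: xq_nonneg)

lemma WW_nonneg: "0 < Q \<Longrightarrow> Q < 1 \<Longrightarrow> 0 \<le> y \<Longrightarrow> 0 \<le> WW Q y N"
  unfolding WW_def wt_def by (intro sum_nonneg mult_nonneg_nonneg) (auto simp: tp_nonneg)

lemma Fy_nonneg:
  assumes "0 < Q" "Q < 1" "0 < y" "y \<le> 1"
  shows "0 \<le> Fy Q y t"
proof -
  have "Q^t \<le> 1" using assms by (simp add: power_le_one)
  hence "(1-y)*Q^t \<le> 1" using assms by (intro mult_le_one) auto
  thus ?thesis unfolding Fy_eq[OF assms(3)[THEN less_imp_neq, symmetric]] using assms by simp
qed

lemma hh_nonneg:
  assumes "0 < Q" "Q < 1" "0 < y" "y \<le> 1"
  shows "0 \<le> hh Q z y N M"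
  unfolding hh_def using assms WW_nonneg[of Q y] Fy_nonneg[OF assms]
  by (intro mult_nonneg_nonneg) auto

lemma zterm_nonneg:
  assumes "0 < Q" "Q < 1" "0 < y" "y \<le> 1" "0 < z"
  shows "0 \<le> zterm Q z y (ls, ms)"
  unfolding zterm_eq[OF assms(1,5)] wt_def using assms Fy_nonneg[OF assms(1-4)] tp_nonneg[of Q]
  by (intro mult_nonneg_nonneg) auto

definition th :: "real \<Rightarrow> real \<Rightarrow> int \<Rightarrow> real" where
  "th Q z m = Q powr (real_of_int (m * (m + 1)) / 2) * z powr (real_of_int m)"

definition phi :: "int \<times> nat \<Rightarrow> nat \<times> nat" where
  "phi p = (case p of (k, n) \<Rightarrow> if 0 \<le> k then (n, n + nat k) else (n + nat (-k), n))"

definition psi :: "nat \<times> nat \<Rightarrow> int \<times> nat" where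
  "psi p = (case p of (N, M) \<Rightarrow> (int M - int N, min N M))"

lemma psi_phi: "psi (phi p) = p"
  by (cases p) (auto simp: phi_def psi_def)

lemma phi_psi: "phi (psi p) = p"
  by (cases p) (auto simp: phi_def psi_def)

lemma fiber_sums:
  assumes Q: "0 < Q" "Q < 1" and y: "0 < y" "y \<le> 1" and z: "0 < z"
  shows "(\<lambda>n. case_prod (hh Q z y) (phi (k, n))) sums (th Q z k * Pinf Q y)"
proof (cases "0 \<le> k")
  case True
  define j where "j = nat k"
  have k: "k = int j" using True by (simp add: j_def)
  have "(\<lambda>n. case_prod (hh Q z y) (phi (k, n))) = (\<lambda>n. z powr real j * core Q y n j)"
  proof (rule ext)
    fix n
    have zj: "z powr (real (n+j) - real n) = z powr real j" by simp
    have "case_prod (hh Q z y) (phi (k, n)) = hh Q z y n (n+j)" by (simp add: phi_def True j_def)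
    also have "\<dots> = z powr real j * core Q y n j" unfolding hh_def core_def zj by (simp only: ac_simps)
    finally show "case_prod (hh Q z y) (phi (k, n)) = z powr real j * core Q y n j" .
  qed
  moreover have "(\<lambda>n. z powr real j * core Q y n j) sums (z powr real j * (Q powr (real j * (real j + 1) / 2) * Pinf Q y))"
    by (intro sums_mult core_sums[OF Q y])
  moreover have "z powr real j * (Q powr (real j * (real j + 1) / 2) * Pinf Q y) = th Q z k * Pinf Q y"
    unfolding th_def k by (simp add: ac_simps)
  ultimately show ?thesis by (simp only:)
next
  case False
  define j where "j = nat (-k)"
  have k: "k = - int j" using False by (simp add: j_def)
  have e: "case_prod (hh Q z y) (phi (k, n)) = z powr (- real j) * Q powr (- real j) * core Q y n j" for n
  proof -
    have "case_prod (hh Q z y) (phi (k, n)) = hh Q z y (n + j) n"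
      by (simp add: phi_def False j_def)
    also have "\<dots> = WW Q y n * WW Q y (n+j) * (Q powr (- real j) *
        Q powr (real n * (real n - 1) / 2 - real n + real (n+j) * (real (n+j) - 1) / 2))
        * z powr (- real j) * Fy Q y (n + (n+j))"
    proof -
      have ex: "real (n+j) * (real (n+j) - 1) / 2 - real (n+j) + real n * (real n - 1) / 2
         = - real j + (real n * (real n - 1) / 2 - real n + real (n+j) * (real (n+j) - 1) / 2)"
        by (simp add: field_simps)
      have q1: "Q powr (real (n+j) * (real (n+j) - 1) / 2 - real (n+j) + real n * (real n - 1) / 2)
         = Q powr (- real j) * Q powr (real n * (real n - 1) / 2 - real n + real (n+j) * (real (n+j) - 1) / 2)"
        by (simp only: ex powr_add)
      have z1: "z powr (real n - real (n + j)) = z powr (- real j)" by simp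
      have f1: "Fy Q y (n + j + n) = Fy Q y (n + (n+j))" by (simp add: ac_simps)
      show ?thesis unfolding hh_def q1 z1 f1 by (simp only: ac_simps)
    qed
    also have "\<dots> = z powr (- real j) * Q powr (- real j) * core Q y n j"
      unfolding core_def by (simp add: ac_simps)
    finally show ?thesis .
  qed
  have S: "(\<lambda>n. z powr (- real j) * Q powr (- real j) * core Q y n j) sums
      (z powr (- real j) * Q powr (- real j) * (Q powr (real j * (real j + 1) / 2) * Pinf Q y))"
    by (intro sums_mult core_sums[OF Q y])
  have V: "z powr (- real j) * Q powr (- real j) * (Q powr (real j * (real j + 1) / 2) * Pinf Q y)
      = th Q z k * Pinf Q y"
  proof -
    have f1: "Q powr (- real j) * Q powr (real j * (real j + 1) / 2) = Q powr (real_of_int (k * (k + 1)) / 2)"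
      unfolding powr_add[symmetric] k by (simp add: field_simps)
    have f2: "z powr (- real j) = z powr (real_of_int k)" using k by simp
    have "z powr (- real j) * Q powr (- real j) * (Q powr (real j * (real j + 1) / 2) * Pinf Q y)
      = (Q powr (- real j) * Q powr (real j * (real j + 1) / 2)) * z powr (- real j) * Pinf Q y"
      by (simp only: ac_simps)
    also have "\<dots> = th Q z k * Pinf Q y" unfolding f1 f2 th_def ..
    finally show ?thesis .
  qed
  show ?thesis unfolding e using S unfolding V .
qed

lemma summable_ratio0:
  fixes f r :: "nat \<Rightarrow> real"
  assumes "\<And>n. 0 \<le> f n" "\<And>n. f (Suc n) = f n * r n" "r \<longlonglongrightarrow> 0"
  shows "summable f"
proof -
  have "\<forall>\<^sub>F n in sequentially. dist (r n) 0 < 1/2"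
    using assms(3)[unfolded tendsto_iff, rule_format, of "1/2"] by simp
  hence "\<forall>\<^sub>F n in sequentially. norm (r n) < 1/2" by (simp add: dist_norm)
  then obtain N where N: "\<And>n. n \<ge> N \<Longrightarrow> norm (r n) < 1/2"
    by (auto simp: eventually_at_top_linorder)
  show ?thesis
  proof (rule summable_ratio_test[where c="1/2" and N=N])
    fix n assume "N \<le> n"
    hence "\<bar>r n\<bar> < 1/2" using N by simp
    hence "r n \<le> 1/2" using abs_ge_self[of "r n"] by linarith
    hence "f n * r n \<le> f n * (1/2)" using assms(1) by (intro mult_left_mono) auto
    thus "norm (f (Suc n)) \<le> 1/2 * norm (f n)"
      using assms(1)[of n] assms(1)[of "Suc n"] assms(2)[of n] by simp
  qed simp
qed

lemma th_summable:
  assumes Q: "0 < Q" "Q < 1" and z: "0 < z"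
  shows "th Q z summable_on UNIV"
proof -
  have qlim: "(\<lambda>n. Q^(Suc n)) \<longlonglongrightarrow> 0"
    using LIMSEQ_power_zero[of Q] Q by (intro LIMSEQ_Suc) auto
  have pos: "(th Q z \<circ> int) summable_on UNIV"
  proof (rule summable_nonneg_imp_summable_on)
    show "0 \<le> (th Q z \<circ> int) n" for n unfolding th_def o_def by simp
    show "summable (th Q z \<circ> int)"
    proof (rule summable_ratio0[where r="\<lambda>n. Q^(Suc n) * z"])
      show "0 \<le> (th Q z \<circ> int) n" for n unfolding th_def o_def by simp
      show "(\<lambda>n. Q^(Suc n) * z) \<longlonglongrightarrow> 0" using tendsto_mult_left_zero[OF qlim] .
      fix n
      have e1: "real_of_int (int (Suc n) * (int (Suc n) + 1)) / 2 = real_of_int (int n * (int n + 1)) / 2 + real (Suc n)"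
        by (simp add: field_simps)
      have e2: "real_of_int (int (Suc n)) = real_of_int (int n) + 1" by simp
      have qs: "Q powr real (Suc n) = Q^Suc n" by (rule powr_realpow[OF Q(1)])
      show "(th Q z \<circ> int) (Suc n) = (th Q z \<circ> int) n * (Q^(Suc n) * z)"
        unfolding th_def o_def e1 e2 powr_add qs using z by (simp only: powr_one ac_simps)
    qed
  qed
  have neg: "(th Q z \<circ> (\<lambda>n. - int n - 1)) summable_on UNIV"
  proof (rule summable_nonneg_imp_summable_on)
    show "0 \<le> (th Q z \<circ> (\<lambda>n. - int n - 1)) n" for n unfolding th_def o_def by simp
    show "summable (th Q z \<circ> (\<lambda>n. - int n - 1))"
    proof (rule summable_ratio0[where r="\<lambda>n. Q^(Suc n) / z"])
      show "0 \<le> (th Q z \<circ> (\<lambda>n. - int n - 1)) n" for n unfolding th_def o_def by simp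
      show "(\<lambda>n. Q^(Suc n) / z) \<longlonglongrightarrow> 0" using tendsto_divide_zero[OF qlim] .
      fix n
      have e1: "real_of_int ((- int (Suc n) - 1) * (- int (Suc n) - 1 + 1)) / 2
          = real_of_int ((- int n - 1) * (- int n - 1 + 1)) / 2 + real (Suc n)"
        by (simp add: field_simps)
      have e2: "real_of_int (- int (Suc n) - 1) = real_of_int (- int n - 1) + (- 1)" by simp
      have qs: "Q powr real (Suc n) = Q^Suc n" by (rule powr_realpow[OF Q(1)])
      have zm: "z powr (- 1) = inverse z" using z by (simp add: powr_minus)
      show "(th Q z \<circ> (\<lambda>n. - int n - 1)) (Suc n) = (th Q z \<circ> (\<lambda>n. - int n - 1)) n * (Q^(Suc n) / z)"
        unfolding th_def o_def e1 e2 powr_add qs zm by (simp only: divide_inverse ac_simps)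
    qed
  qed
  have "th Q z summable_on (range int)"
    using pos by (subst summable_on_reindex) (auto simp: inj_on_def)
  moreover have "th Q z summable_on (range (\<lambda>n. - int n - 1))"
    using neg by (subst summable_on_reindex) (auto simp: inj_on_def)
  ultimately have "th Q z summable_on (range int \<union> range (\<lambda>n. - int n - 1))"
    by (rule summable_on_union)
  moreover have "range int \<union> range (\<lambda>n. - int n - 1) = (UNIV :: int set)"
  proof -
    have "k \<in> range int \<union> range (\<lambda>n. - int n - 1)" for k :: int
    proof (cases "0 \<le> k")
      case True
      hence "k = int (nat k)" by simp
      thus ?thesis by blast
    next
      case False
      hence "k = - int (nat (-k-1)) - 1" by simp
      thus ?thesis by blast
    qed
    thus ?thesis by blast
  qed
  ultimately show ?thesis by simp
qed


lemma zterm_nil: "zterm Q z y ([], []) = 1"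
  unfolding zterm_def zblock_def by simp

lemma prod_part:
  assumes Q: "0 < Q" "Q < 1" and y: "0 < y" "y \<le> 1"
  shows "(\<Prod>i\<le>n. (1 - Q ^ Suc i) / (1 + (y - 1) * Q ^ Suc i)) = 1 / Pn Q y (Suc n)"
proof -
  have g: "(1 - Q ^ Suc i) / (1 + (y - 1) * Q ^ Suc i) = 1 / (1 + y * xq Q (Suc i))" for i
  proof -
    have a: "Q ^ Suc i < 1" "0 < Q ^ Suc i" using qpow_lt1[OF Q, of i] Q by auto
    have b: "(1 - y) * Q ^ Suc i < 1"
    proof -
      have "(1 - y) * Q ^ Suc i \<le> Q ^ Suc i" using a y by (intro mult_left_le_one_le) auto
      thus ?thesis using a by linarith
    qed
    have "1 + (y - 1) * Q ^ Suc i \<noteq> 0" using b by (simp add: algebra_simps)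
    moreover have "1 - Q ^ Suc i \<noteq> 0" using a by simp
    ultimately show ?thesis unfolding xq_def by (simp add: field_simps)
  qed
  have "(\<Prod>i\<le>n. (1 - Q ^ Suc i) / (1 + (y - 1) * Q ^ Suc i)) = (\<Prod>i<Suc n. 1 / (1 + y * xq Q (Suc i)))"
    unfolding g lessThan_Suc_atMost ..
  also have "\<dots> = 1 / Pn Q y (Suc n)" unfolding Pn_def by (simp add: prod_dividef)
  finally show ?thesis .
qed

theorem main_result:
  fixes Q z y :: real
  assumes "0 < Q" "Q < 1" "0 < z" "0 < y" "y \<le> 1"
  shows "zterm Q z y summable_on zindex
    \<and> convergent_prod (\<lambda>i. (1 - Q ^ Suc i) / (1 + (y - 1) * Q ^ Suc i))
    \<and> ((\<lambda>m::int. Q powr (real_of_int (m * (m + 1)) / 2) * z powr (real_of_int m))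
          has_sum (Zfun Q z y * (\<Prod>i. (1 - Q ^ Suc i) / (1 + (y - 1) * Q ^ Suc i)))) UNIV"
proof -
  have Q: "0 < Q" "Q < 1" and y: "0 < y" "y \<le> 1" and z: "0 < z" using assms by auto
  define P where "P = Pinf Q y"
  define TS where "TS = infsum (th Q z) UNIV"
  have thS: "(th Q z has_sum TS) UNIV" using th_summable[OF Q z] unfolding TS_def by simp
  have P1: "1 \<le> P" unfolding P_def by (rule Pn_lim(2)[OF Q y])
  define H where "H = case_prod (hh Q z y)"
  have Hnn: "0 \<le> H p" for p unfolding H_def using hh_nonneg[OF Q y] by (cases p) auto
  have f1: "((\<lambda>n. H (phi (k, n))) has_sum (th Q z k * P)) UNIV" for k
    unfolding H_def P_def by (rule sums_nonneg_imp_has_sum[OF fiber_sums[OF Q y z]]) (use Hnn H_def in auto)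
  have f2: "((\<lambda>k. th Q z k * P) has_sum (TS * P)) UNIV" by (rule has_sum_cmult_left[OF thS])
  have f3: "((\<lambda>p. H (phi p)) has_sum (TS * P)) (Sigma UNIV (\<lambda>_. UNIV))"
  proof (rule has_sum_SigmaI[where g="\<lambda>k. th Q z k * P"])
    show "((\<lambda>n. H (phi (k, n))) has_sum (th Q z k * P)) UNIV" for k by (rule f1)
    show "((\<lambda>k. th Q z k * P) has_sum (TS * P)) UNIV" by (rule f2)
    show "(\<lambda>p. H (phi p)) summable_on (Sigma UNIV (\<lambda>_. UNIV))"
      by (rule summable_on_SigmaI[where g="\<lambda>k. th Q z k * P"])
         (use f1 f2 Hnn in \<open>auto simp: summable_on_def\<close>)
  qed
  have f4: "(H has_sum (TS * P)) UNIV"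
  proof -
    have "((\<lambda>p. H (phi p)) has_sum (TS * P)) UNIV = (H has_sum (TS * P)) UNIV"
      by (rule has_sum_reindex_bij_witness[where i=psi and j=phi]) (auto simp: psi_phi phi_psi)
    thus ?thesis using f3 by simp
  qed
  define Sg where "Sg = Sigma (UNIV :: (nat \<times> nat) set) (\<lambda>NM. CL (fst NM) \<times> CL (snd NM))"
  have f5: "((\<lambda>(NM, p). zterm Q z y p) has_sum (TS * P)) Sg"
    unfolding Sg_def
  proof (rule has_sum_SigmaI[where g=H])
    show "((\<lambda>p. (\<lambda>(NM, p). zterm Q z y p) (NM, p)) has_sum H NM) (CL (fst NM) \<times> CL (snd NM))" for NM
      by (rule has_sum_finiteI) (auto simp: CL_finite H_def sum_zterm[OF Q(1) z] split: prod.split)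
    show "(H has_sum TS * P) UNIV" by (rule f4)
    show "(\<lambda>(NM, p). zterm Q z y p) summable_on (SIGMA NM:UNIV. CL (fst NM) \<times> CL (snd NM))"
    proof (rule summable_on_SigmaI[where g=H])
      show "((\<lambda>p. (\<lambda>(NM, p). zterm Q z y p) (NM, p)) has_sum H NM) (CL (fst NM) \<times> CL (snd NM))" for NM
        by (rule has_sum_finiteI) (auto simp: CL_finite H_def sum_zterm[OF Q(1) z] split: prod.split)
      show "H summable_on UNIV" using f4 by (auto simp: summable_on_def)
      show "0 \<le> (\<lambda>(NM, p). zterm Q z y p) (NM, p)" for NM p
        using zterm_nonneg[OF Q y z] by (cases p) auto
    qed
  qed
  define U where "U = {(ls, ms). (\<forall>l\<in>set ls. 1 \<le> (l::nat)) \<and> (\<forall>m\<in>set ms. 1 \<le> (m::nat))}"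
  have f6: "(zterm Q z y has_sum (TS * P)) U"
  proof -
    have "((\<lambda>(NM, p). zterm Q z y p) has_sum (TS * P)) Sg = (zterm Q z y has_sum (TS * P)) U"
      by (rule has_sum_reindex_bij_witness[where i="\<lambda>p. ((sum_list (fst p), sum_list (snd p)), p)" and j=snd])
         (auto simp: Sg_def U_def CL_def)
    thus ?thesis using f5 by simp
  qed
  have Uins: "U = insert ([], []) zindex" and nz: "([], []) \<notin> zindex"
    unfolding U_def zindex_def by auto
  have summ: "zterm Q z y summable_on zindex"
    by (rule summable_on_subset_banach[of _ U]) (use f6 Uins in \<open>auto simp: summable_on_def\<close>)
  have "(zterm Q z y has_sum (zterm Q z y ([], []) + infsum (zterm Q z y) zindex)) U"
    unfolding Uins by (rule has_sum_insert[OF nz]) (use summ in simp)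
  hence "1 + infsum (zterm Q z y) zindex = TS * P"
    using f6 zterm_nil by (metis has_sum_unique)
  hence Zf: "Zfun Q z y = TS * P" unfolding Zfun_def by simp
  have P0: "P \<noteq> 0" using P1 by simp
  have rp: "raw_has_prod (\<lambda>i. (1 - Q ^ Suc i) / (1 + (y - 1) * Q ^ Suc i)) 0 (1 / P)"
    unfolding raw_has_prod_def
  proof
    have "(\<lambda>n. Pn Q y (Suc n)) \<longlonglongrightarrow> P" unfolding P_def by (rule LIMSEQ_Suc[OF Pn_lim(1)[OF Q y]])
    hence "(\<lambda>n. 1 / Pn Q y (Suc n)) \<longlonglongrightarrow> 1 / P" using P0 by (intro tendsto_intros)
    thus "(\<lambda>n. \<Prod>i\<le>n. (1 - Q ^ Suc (i + 0)) / (1 + (y - 1) * Q ^ Suc (i + 0))) \<longlonglongrightarrow> 1 / P"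
      using prod_part[OF Q y] by simp
    show "1 / P \<noteq> 0" using P0 by simp
  qed
  hence hp: "(\<lambda>i. (1 - Q ^ Suc i) / (1 + (y - 1) * Q ^ Suc i)) has_prod (1 / P)"
    unfolding has_prod_def by blast
  have cp: "convergent_prod (\<lambda>i. (1 - Q ^ Suc i) / (1 + (y - 1) * Q ^ Suc i))"
    and pv: "(\<Prod>i. (1 - Q ^ Suc i) / (1 + (y - 1) * Q ^ Suc i)) = 1 / P"
    using hp has_prod_iff by blast+
  have "Zfun Q z y * (\<Prod>i. (1 - Q ^ Suc i) / (1 + (y - 1) * Q ^ Suc i)) = TS"
    unfolding Zf pv using P0 by simp
  moreover have "(\<lambda>m::int. Q powr (real_of_int (m * (m + 1)) / 2) * z powr (real_of_int m)) = th Q z"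
    unfolding th_def ..
  ultimately show ?thesis using summ cp thS by simp
qed


theorem theorem1p1:
  fixes Q z y :: real
  assumes "0 < Q" "Q < 1" "0 < z" "0 < y" "y \<le> 1"
  shows "zterm Q z y summable_on zindex
    \<and> convergent_prod (\<lambda>i. (1 - Q ^ Suc i) / (1 + (y - 1) * Q ^ Suc i))
    \<and> ((\<lambda>m::int. Q powr (real_of_int (m * (m + 1)) / 2) * z powr (real_of_int m))
          has_sum (Zfun Q z y * (\<Prod>i. (1 - Q ^ Suc i) / (1 + (y - 1) * Q ^ Suc i)))) UNIV"
  by (rule main_result[OF assms])

end
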